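(* Let $m$ be a positive integer, $\gamma=(f,g,h)\in C^m(\mathbb{R},\mathbb{R}^3)$ and $K\subseteq\mathbb{R}$ compact. Suppose $\alpha$ is a modulus of continuity such that, for all $x,y$ in an interval containing $K$ and for $\phi\in\{f,g\}$, $$|\phi^{(m)}(x)-\phi^{(m)}(y)|\le\alpha(|x-y|),\quad |\phi(y)-T^m_x\phi(y)|\le\alpha(|x-y|)|x-y|^m,\quad |\phi'(y)-(T^m_x\phi)'(y)|\le\alpha(|x-y|)|x-y|^{m-1}.$$ Then there is a constant $C>0$ depending only on $\gamma$ and $K$ such that for all $a,b\in K$, $$|A(\gamma;b,a)|\le C\big(|A(\gamma;a,b)|+\alpha(|b-a|)|b-a|^m\big).$$
   Context: $C^m(\mathbb{R},\mathbb{R}^3)$: curves whose components are $m$-times continuously differentiable with bounded $m$th derivative. A modulus of continuity is a continuous, increasing, concave $\alpha:[0,\infty)\to[0,\infty)$ with $\alpha(0)=0$. $T^m_x\phi(y)=\sum_{k=0}^m\frac{\phi^{(k)}(x)}{k!}(y-x)^k$, written $T_x\phi$. For $a,b\in\mathbb{R}$ (in either order, with oriented integrals): $A(\gamma;a,b)= h(b)-h(a)-2\int_a^b\big((T_af)'T_ag-(T_ag)'T_af\big) + 2f(a)(g(b)-T_ag(b)) - 2g(a)(f(b)-T_af(b))$. *)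

theory Defs
  imports "HOL-Analysis.Analysis"
begin

abbreviation nderiv :: "nat \<Rightarrow> (real \<Rightarrow> real) \<Rightarrow> real \<Rightarrow> real" where
  "nderiv k \<phi> \<equiv> (deriv ^^ k) \<phi>"

definition Cm :: "nat \<Rightarrow> (real \<Rightarrow> real) \<Rightarrow> bool" where
  "Cm m \<phi> \<longleftrightarrow>
     (\<forall>k<m. \<forall>x. (nderiv k \<phi> has_real_derivative nderiv (Suc k) \<phi> x) (at x))
     \<and> continuous_on UNIV (nderiv m \<phi>)
     \<and> bounded (range (nderiv m \<phi>))"

definition modulus_of_continuity :: "(real \<Rightarrow> real) \<Rightarrow> bool" where
  "modulus_of_continuity \<alpha> \<longleftrightarrow>
     continuous_on {0..} \<alpha> \<and> mono_on {0..} \<alpha> \<and> concave_on {0..} \<alpha>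
     \<and> \<alpha> 0 = 0 \<and> (\<forall>t\<ge>0. \<alpha> t \<ge> 0)"

definition taylor :: "nat \<Rightarrow> (real \<Rightarrow> real) \<Rightarrow> real \<Rightarrow> real \<Rightarrow> real" where
  "taylor m \<phi> x y = (\<Sum>k\<le>m. nderiv k \<phi> x / fact k * (y - x) ^ k)"

definition oint :: "(real \<Rightarrow> real) \<Rightarrow> real \<Rightarrow> real \<Rightarrow> real" where
  "oint F a b = (if a \<le> b then integral {a..b} F else - integral {b..a} F)"

definition Aarea :: "nat \<Rightarrow> (real \<Rightarrow> real) \<Rightarrow> (real \<Rightarrow> real) \<Rightarrow> (real \<Rightarrow> real)
                      \<Rightarrow> real \<Rightarrow> real \<Rightarrow> real" where
  "Aarea m f g h a b =
     h b - h a
     - 2 * oint (\<lambda>t. deriv (taylor m f a) t * taylor m g a t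
                    - deriv (taylor m g a) t * taylor m f a t) a b
     + 2 * f a * (g b - taylor m g a b)
     - 2 * g a * (f b - taylor m f a b)"

end

theory Submission
  imports Defs
begin

lemma cont_nderiv:
  assumes "Cm m \<phi>" "k \<le> m"
  shows "continuous_on UNIV (nderiv k \<phi>)"
proof (cases "k = m")
  case True thus ?thesis using assms by (simp add: Cm_def)
next
  case False
  hence "k < m" using assms by simp
  hence "\<forall>x. (nderiv k \<phi> has_real_derivative nderiv (Suc k) \<phi> x) (at x)" using assms by (simp add: Cm_def)
  thus ?thesis using DERIV_isCont by (metis continuous_at_imp_continuous_on)
qed

lemma taylor_has_deriv:
  "((taylor m \<phi> x) has_real_derivative (\<Sum>k\<le>m. nderiv k \<phi> x / fact k * (real k * (y - x) ^ (k - 1)))) (at y)"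
  unfolding taylor_def[abs_def]
  apply (auto intro!: derivative_eq_intros)
  apply (auto intro!: sum.cong simp: mult_ac)
  done

lemma deriv_taylor:
  "deriv (taylor m \<phi> x) = (\<lambda>y. \<Sum>k\<le>m. nderiv k \<phi> x / fact k * (real k * (y - x) ^ (k - 1)))"
  using taylor_has_deriv DERIV_imp_deriv by blast

lemma cont_deriv_taylor: "continuous_on S (deriv (taylor m \<phi> x))"
  unfolding deriv_taylor by (intro continuous_intros)

lemma cont_taylor: "continuous_on S (taylor m \<phi> x)"
  unfolding taylor_def[abs_def] by (intro continuous_intros)

lemma oint_swap: "oint F b a = - oint F a b"
proof (cases "a = b")
  case True thus ?thesis by (simp add: oint_def)
next
  case False
  thus ?thesis by (cases "a < b") (simp_all add: oint_def)
qed

lemma oint_diff: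
  assumes "continuous_on UNIV F" "continuous_on UNIV G"
  shows "oint F a b - oint G a b = oint (\<lambda>t. F t - G t) a b"
proof -
  have i: "F integrable_on {u..v}" "G integrable_on {u..v}" for u v
    using assms by (auto intro!: integrable_continuous_real intro: continuous_on_subset[OF _ subset_UNIV])
  show ?thesis
  proof (cases "a \<le> b")
    case True thus ?thesis by (simp add: oint_def integral_diff[OF i(1) i(2)])
  next
    case False thus ?thesis by (simp add: oint_def integral_diff[OF i(1) i(2)])
  qed
qed

lemma oint_bound:
  assumes "continuous_on UNIV F" "\<And>t. min a b \<le> t \<Longrightarrow> t \<le> max a b \<Longrightarrow> \<bar>F t\<bar> \<le> M"
  shows "\<bar>oint F a b\<bar> \<le> M * \<bar>b - a\<bar>"
proof (cases "a \<le> b")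
  case True
  have "norm (integral {a..b} F) \<le> M * (b - a)"
    by (rule integral_bound) (use True assms in \<open>auto intro: continuous_on_subset[OF _ subset_UNIV]\<close>)
  thus ?thesis using True by (simp add: oint_def)
next
  case False
  have "norm (integral {b..a} F) \<le> M * (a - b)"
    by (rule integral_bound) (use False assms in \<open>auto intro: continuous_on_subset[OF _ subset_UNIV]\<close>)
  thus ?thesis using False by (simp add: oint_def)
qed

lemma tay_bd:
  assumes "\<forall>k\<le>m. \<bar>nderiv k \<phi> x\<bar> \<le> B" "\<bar>t - x\<bar> \<le> D" "D \<ge> 0"
  shows "\<bar>taylor m \<phi> x t\<bar> \<le> (\<Sum>k\<le>m. B * D ^ k)"
  unfolding taylor_def
proof (rule order_trans[OF sum_abs], rule sum_mono)
  fix k assume k: "k \<in> {..m}"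
  have f1: "fact k \<ge> (1::real)" by simp
  have "\<bar>nderiv k \<phi> x\<bar> / fact k \<le> \<bar>nderiv k \<phi> x\<bar>"
  proof -
    have "\<bar>nderiv k \<phi> x\<bar> * 1 \<le> \<bar>nderiv k \<phi> x\<bar> * fact k" by (rule mult_left_mono[OF f1]) simp
    thus ?thesis by (simp add: divide_le_eq)
  qed
  also have "\<dots> \<le> B" using assms k by auto
  finally have c: "\<bar>nderiv k \<phi> x\<bar> / fact k \<le> B" .
  have p: "\<bar>t - x\<bar> ^ k \<le> D ^ k" by (rule power_mono) (use assms in auto)
  have "\<bar>nderiv k \<phi> x / fact k * (t - x) ^ k\<bar> = \<bar>nderiv k \<phi> x\<bar> / fact k * \<bar>t - x\<bar> ^ k"
    by (simp add: abs_mult power_abs)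
  also have "\<dots> \<le> B * D ^ k"
    by (rule mult_mono[OF c p]) (use assms c in auto)
  finally show "\<bar>nderiv k \<phi> x / fact k * (t - x) ^ k\<bar> \<le> B * D ^ k" .
qed

lemma prod_bd:
  fixes u v B X :: real
  assumes "\<bar>u\<bar> \<le> B" "\<bar>v\<bar> \<le> X"
  shows "\<bar>2 * u * v\<bar> \<le> 2 * (B * X)"
proof -
  have "\<bar>u\<bar> * \<bar>v\<bar> \<le> B * X" by (rule mult_mono) (use assms in auto)
  thus ?thesis by (simp add: abs_mult)
qed

lemma key:
  fixes \<alpha> :: "real \<Rightarrow> real" and I :: "real set"
  assumes m1: "m \<ge> 1" and Cf: "Cm m f" and Cg: "Cm m g"
    and mono: "mono_on {0..} \<alpha>" and anonneg: "\<forall>t\<ge>0. \<alpha> t \<ge> 0"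
    and I: "is_interval I" "a \<in> I" "b \<in> I"
    and hyp: "\<forall>\<phi>\<in>{f, g}. \<forall>x\<in>I. \<forall>y\<in>I.
              \<bar>\<phi> y - taylor m \<phi> x y\<bar> \<le> \<alpha> \<bar>x - y\<bar> * \<bar>x - y\<bar> ^ m
            \<and> \<bar>deriv \<phi> y - deriv (taylor m \<phi> x) y\<bar> \<le> \<alpha> \<bar>x - y\<bar> * \<bar>x - y\<bar> ^ (m - 1)"
    and R: "\<bar>a\<bar> \<le> R" "\<bar>b\<bar> \<le> R"
    and Bnd: "\<And>k x. k \<le> m \<Longrightarrow> \<bar>x\<bar> \<le> R \<Longrightarrow> \<bar>nderiv k f x\<bar> \<le> B \<and> \<bar>nderiv k g x\<bar> \<le> B"
  shows "\<bar>Aarea m f g h a b + Aarea m f g h b a\<bar>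
     \<le> (4 * (2 * (\<Sum>k\<le>m. B * (2 * R) ^ k) + 2 * B * (2 * R)) + 8 * B) * (\<alpha> \<bar>b - a\<bar> * \<bar>b - a\<bar> ^ m)"
proof -
  define r where "r = \<bar>b - a\<bar>"
  define ar where "ar = \<alpha> r"
  define TB where "TB = (\<Sum>k\<le>m. B * (2 * R) ^ k)"
  define E where "E = 2 * TB + 2 * B * (2 * R)"
  define P where "P x t = deriv (taylor m f x) t * taylor m g x t - deriv (taylor m g x) t * taylor m f x t" for x t
  define Q where "Q t = deriv f t * g t - deriv g t * f t" for t
  have R0: "R \<ge> 0" using R by simp
  have B0: "B \<ge> 0" using Bnd[of 0 a] R by auto
  have r0: "r \<ge> 0" by (simp add: r_def)
  have r2R: "r \<le> 2 * R" using R by (simp add: r_def)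
  have ar0: "ar \<ge> 0" using anonneg r0 by (simp add: ar_def)
  have rm: "r ^ m = r * r ^ (m - 1)" using m1 by (metis One_nat_def Suc_le_D diff_Suc_1 power_Suc)
  have rmle: "r ^ m \<le> 2 * R * r ^ (m - 1)" unfolding rm
    by (rule mult_right_mono[OF r2R]) (simp add: r0)
  have TB0: "TB \<ge> 0" unfolding TB_def using B0 R0 by (intro sum_nonneg) auto
  have tay: "\<bar>taylor m \<phi> x t\<bar> \<le> TB" if "\<phi> \<in> {f, g}" "\<bar>x\<bar> \<le> R" "\<bar>t\<bar> \<le> R" for \<phi> x t
    unfolding TB_def
    by (rule tay_bd) (use that Bnd R0 in auto)
  have fb: "\<bar>f x\<bar> \<le> B" "\<bar>g x\<bar> \<le> B" "\<bar>deriv f x\<bar> \<le> B" "\<bar>deriv g x\<bar> \<le> B" if "\<bar>x\<bar> \<le> R" for x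
    using Bnd[of 0 x] Bnd[of 1 x] m1 that by auto
  have ebd: "\<bar>\<phi> t - taylor m \<phi> x t\<bar> \<le> ar * r ^ m"
    and dbd: "\<bar>deriv \<phi> t - deriv (taylor m \<phi> x) t\<bar> \<le> ar * r ^ (m - 1)"
    if \<phi>: "\<phi> \<in> {f, g}" and x: "x \<in> {a, b}" and t: "min a b \<le> t" "t \<le> max a b" for \<phi> x t
  proof -
    have mm: "min a b \<in> I \<and> max a b \<in> I" using I by (cases "a \<le> b") (simp_all add: min_def max_def)
    have tI: "t \<in> I" using I(1) mm t unfolding is_interval_1 by blast
    have xI: "x \<in> I" using x I by auto
    have xt: "\<bar>x - t\<bar> \<le> r" using x t unfolding r_def by (cases "a \<le> b"; auto simp: min_def max_def)
    have al: "\<alpha> \<bar>x - t\<bar> \<le> ar" unfolding ar_def by (rule mono_onD[OF mono]) (use xt in simp_all)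
    have al0: "\<alpha> \<bar>x - t\<bar> \<ge> 0" using anonneg by simp
    note h0 = hyp[rule_format, OF \<phi> xI tI]
    note h = conjunct1[OF h0] conjunct2[OF h0]
    have "\<alpha> \<bar>x - t\<bar> * \<bar>x - t\<bar> ^ m \<le> ar * r ^ m"
      by (rule mult_mono[OF al power_mono[OF xt]]) (use ar0 in auto)
    thus "\<bar>\<phi> t - taylor m \<phi> x t\<bar> \<le> ar * r ^ m" using h(1) by linarith
    have "\<alpha> \<bar>x - t\<bar> * \<bar>x - t\<bar> ^ (m - 1) \<le> ar * r ^ (m - 1)"
      by (rule mult_mono[OF al power_mono[OF xt]]) (use ar0 in auto)
    thus "\<bar>deriv \<phi> t - deriv (taylor m \<phi> x) t\<bar> \<le> ar * r ^ (m - 1)" using h(2) by linarith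
  qed
  have PQ: "\<bar>P x t - Q t\<bar> \<le> E * (ar * r ^ (m - 1))"
    if x: "x \<in> {a, b}" and t: "min a b \<le> t" "t \<le> max a b" for x t
  proof -
    have tR: "\<bar>t\<bar> \<le> R" and xR: "\<bar>x\<bar> \<le> R" using t x R by auto
    define F where "F = taylor m f x t"
    define G where "G = taylor m g x t"
    define F' where "F' = deriv (taylor m f x) t"
    define G' where "G' = deriv (taylor m g x) t"
    have eq: "P x t - Q t = (F' - deriv f t) * G + deriv f t * (G - g t) - (G' - deriv g t) * F - deriv g t * (F - f t)"
      unfolding P_def Q_def F_def G_def F'_def G'_def by (simp add: algebra_simps)
    have FG: "\<bar>F\<bar> \<le> TB" "\<bar>G\<bar> \<le> TB" unfolding F_def G_def using tay tR xR by auto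
    have d1: "\<bar>F' - deriv f t\<bar> \<le> ar * r ^ (m - 1)" "\<bar>G' - deriv g t\<bar> \<le> ar * r ^ (m - 1)"
      unfolding F'_def G'_def using dbd[OF _ x t] by (auto simp: abs_minus_commute)
    have e1: "\<bar>F - f t\<bar> \<le> ar * r ^ m" "\<bar>G - g t\<bar> \<le> ar * r ^ m"
      unfolding F_def G_def using ebd[OF _ x t] by (auto simp: abs_minus_commute)
    have arm: "ar * r ^ m \<le> 2 * R * (ar * r ^ (m - 1))"
      using mult_left_mono[OF rmle ar0] by (simp add: mult_ac)
    have arm0: "ar * r ^ (m - 1) \<ge> 0" using ar0 r0 by simp
    have t1: "\<bar>(F' - deriv f t) * G\<bar> \<le> ar * r ^ (m - 1) * TB"
      unfolding abs_mult by (rule mult_mono) (use d1 FG arm0 in auto)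
    have t3: "\<bar>(G' - deriv g t) * F\<bar> \<le> ar * r ^ (m - 1) * TB"
      unfolding abs_mult by (rule mult_mono) (use d1 FG arm0 in auto)
    have t2: "\<bar>deriv f t * (G - g t)\<bar> \<le> B * (2 * R * (ar * r ^ (m - 1)))"
      unfolding abs_mult by (rule mult_mono) (use fb[OF tR] e1 arm B0 in auto)
    have t4: "\<bar>deriv g t * (F - f t)\<bar> \<le> B * (2 * R * (ar * r ^ (m - 1)))"
      unfolding abs_mult by (rule mult_mono) (use fb[OF tR] e1 arm B0 in auto)
    have "\<bar>P x t - Q t\<bar> \<le> ar * r ^ (m - 1) * TB + B * (2 * R * (ar * r ^ (m - 1)))
       + ar * r ^ (m - 1) * TB + B * (2 * R * (ar * r ^ (m - 1)))"
      unfolding eq using t1 t2 t3 t4 by linarith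
    also have "\<dots> = E * (ar * r ^ (m - 1))" by (simp add: E_def algebra_simps)
    finally show ?thesis .
  qed
  have Pc: "continuous_on UNIV (P x)" for x
    unfolding P_def[abs_def] by (intro continuous_intros cont_deriv_taylor cont_taylor)
  have ob: "\<bar>oint (\<lambda>t. P a t - P b t) a b\<bar> \<le> (2 * E * (ar * r ^ (m - 1))) * \<bar>b - a\<bar>"
  proof (rule oint_bound)
    show "continuous_on UNIV (\<lambda>t. P a t - P b t)" using Pc by (intro continuous_intros)
    fix t assume t: "min a b \<le> t" "t \<le> max a b"
    have "\<bar>P a t - P b t\<bar> \<le> \<bar>P a t - Q t\<bar> + \<bar>P b t - Q t\<bar>" by linarith
    also have "\<dots> \<le> 2 * E * (ar * r ^ (m - 1))" using PQ[OF _ t, of a] PQ[OF _ t, of b] by auto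
    finally show "\<bar>P a t - P b t\<bar> \<le> 2 * E * (ar * r ^ (m - 1))" .
  qed
  have ob': "\<bar>oint (\<lambda>t. P a t - P b t) a b\<bar> \<le> 2 * E * (ar * r ^ m)"
  proof -
    have "(2 * E * (ar * r ^ (m - 1))) * \<bar>b - a\<bar> = 2 * E * (ar * (r * r ^ (m - 1)))"
      unfolding r_def[symmetric] by (simp only: mult_ac)
    also have "\<dots> = 2 * E * (ar * r ^ m)" by (simp only: rm)
    finally show ?thesis using ob by linarith
  qed
  have Pa: "P x = (\<lambda>t. deriv (taylor m f x) t * taylor m g x t - deriv (taylor m g x) t * taylor m f x t)" for x
    by (rule ext) (simp only: P_def)
  have A1: "Aarea m f g h a b = h b - h a - 2 * oint (P a) a b
      + 2 * f a * (g b - taylor m g a b) - 2 * g a * (f b - taylor m f a b)"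
    by (simp only: Aarea_def Pa)
  have A2: "Aarea m f g h b a = h a - h b - 2 * oint (P b) b a
      + 2 * f b * (g a - taylor m g b a) - 2 * g b * (f a - taylor m f b a)"
    by (simp only: Aarea_def Pa)
  have sumeq: "Aarea m f g h a b + Aarea m f g h b a = -2 * oint (\<lambda>t. P a t - P b t) a b
      + 2 * f a * (g b - taylor m g a b) - 2 * g a * (f b - taylor m f a b)
      + 2 * f b * (g a - taylor m g b a) - 2 * g b * (f a - taylor m f b a)"
  proof -
    have "oint (\<lambda>t. P a t - P b t) a b = oint (P a) a b - oint (P b) a b"
      using oint_diff[OF Pc Pc] by simp
    moreover have "oint (P b) b a = - oint (P b) a b" by (rule oint_swap)
    ultimately show ?thesis unfolding A1 A2 by linarith
  qed
  have ab: "min a b \<le> a" "a \<le> max a b" "min a b \<le> b" "b \<le> max a b" by auto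
  have bd1: "\<bar>2 * f a * (g b - taylor m g a b)\<bar> \<le> 2 * (B * (ar * r ^ m))"
    by (rule prod_bd) (use ebd[of g a b] ab fb R in auto)
  have bd2: "\<bar>2 * g a * (f b - taylor m f a b)\<bar> \<le> 2 * (B * (ar * r ^ m))"
    by (rule prod_bd) (use ebd[of f a b] ab fb R in auto)
  have bd3: "\<bar>2 * f b * (g a - taylor m g b a)\<bar> \<le> 2 * (B * (ar * r ^ m))"
    by (rule prod_bd) (use ebd[of g b a] ab fb R in auto)
  have bd4: "\<bar>2 * g b * (f a - taylor m f b a)\<bar> \<le> 2 * (B * (ar * r ^ m))"
    by (rule prod_bd) (use ebd[of f b a] ab fb R in auto)
  have "\<bar>Aarea m f g h a b + Aarea m f g h b a\<bar> \<le> 2 * (2 * E * (ar * r ^ m)) + 4 * (2 * (B * (ar * r ^ m)))"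
    unfolding sumeq using ob' bd1 bd2 bd3 bd4 by linarith
  also have "\<dots> = (4 * E + 8 * B) * (ar * r ^ m)" by (simp add: algebra_simps)
  finally show ?thesis by (simp only: E_def TB_def ar_def r_def)
qed

theorem lemma3p4:
  fixes m :: nat and f g h :: "real \<Rightarrow> real" and K :: "real set"
  assumes "m \<ge> 1"
    and "Cm m f" and "Cm m g" and "Cm m h"
    and "compact K"
  shows "\<exists>C>0. \<forall>\<alpha> I. modulus_of_continuity \<alpha> \<and> is_interval I \<and> K \<subseteq> I \<and>
           (\<forall>\<phi>\<in>{f, g}. \<forall>x\<in>I. \<forall>y\<in>I.
              \<bar>nderiv m \<phi> x - nderiv m \<phi> y\<bar> \<le> \<alpha> \<bar>x - y\<bar>
            \<and> \<bar>\<phi> y - taylor m \<phi> x y\<bar> \<le> \<alpha> \<bar>x - y\<bar> * \<bar>x - y\<bar> ^ m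
            \<and> \<bar>deriv \<phi> y - deriv (taylor m \<phi> x) y\<bar> \<le> \<alpha> \<bar>x - y\<bar> * \<bar>x - y\<bar> ^ (m - 1))
         \<longrightarrow> (\<forall>a\<in>K. \<forall>b\<in>K.
               \<bar>Aarea m f g h b a\<bar> \<le> C * (\<bar>Aarea m f g h a b\<bar> + \<alpha> \<bar>b - a\<bar> * \<bar>b - a\<bar> ^ m))"
proof -
  obtain R0 where R0: "\<forall>x\<in>K. norm x \<le> R0"
    using compact_imp_bounded[OF assms(5)] bounded_iff by blast
  define R where "R = max R0 0"
  have RK: "\<bar>x\<bar> \<le> R" if "x \<in> K" for x using R0 that by (auto simp: R_def)
  define S where "S = (\<Union>k\<in>{..m}. nderiv k f ` {-R..R} \<union> nderiv k g ` {-R..R})"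
  have "compact S" unfolding S_def
  proof (rule compact_UN)
    fix k assume "k \<in> {..m}"
    hence k: "k \<le> m" by simp
    show "compact (nderiv k f ` {-R..R} \<union> nderiv k g ` {-R..R})"
      by (intro compact_Un compact_continuous_image compact_Icc
          continuous_on_subset[OF cont_nderiv[OF assms(2) k] subset_UNIV]
          continuous_on_subset[OF cont_nderiv[OF assms(3) k] subset_UNIV])
  qed simp
  then obtain B where B: "\<forall>y\<in>S. norm y \<le> B"
    using compact_imp_bounded bounded_iff by blast
  have Bnd: "\<bar>nderiv k f x\<bar> \<le> B \<and> \<bar>nderiv k g x\<bar> \<le> B" if "k \<le> m" "\<bar>x\<bar> \<le> R" for k x
  proof -
    have xin: "x \<in> {-R..R}" using that by auto
    have km: "k \<in> {..m}" using that(1) by simp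
    have "nderiv k f x \<in> S" unfolding S_def by (rule UN_I[OF km], rule UnI1, rule imageI[OF xin])
    moreover have "nderiv k g x \<in> S" unfolding S_def by (rule UN_I[OF km], rule UnI2, rule imageI[OF xin])
    ultimately
    show ?thesis using B by auto
  qed
  define C0 where "C0 = (4 * (2 * (\<Sum>k\<le>m. B * (2 * R) ^ k) + 2 * B * (2 * R)) + 8 * B)"
  define C where "C = max 1 C0"
  have C1: "C \<ge> 1" "C \<ge> C0" by (auto simp: C_def)
  show ?thesis
  proof (rule exI[of _ C], intro conjI allI impI ballI)
    show "C > 0" using C1 by simp
    fix \<alpha> I a b
    assume H: "modulus_of_continuity \<alpha> \<and> is_interval I \<and> K \<subseteq> I \<and>
           (\<forall>\<phi>\<in>{f, g}. \<forall>x\<in>I. \<forall>y\<in>I.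
              \<bar>nderiv m \<phi> x - nderiv m \<phi> y\<bar> \<le> \<alpha> \<bar>x - y\<bar>
            \<and> \<bar>\<phi> y - taylor m \<phi> x y\<bar> \<le> \<alpha> \<bar>x - y\<bar> * \<bar>x - y\<bar> ^ m
            \<and> \<bar>deriv \<phi> y - deriv (taylor m \<phi> x) y\<bar> \<le> \<alpha> \<bar>x - y\<bar> * \<bar>x - y\<bar> ^ (m - 1))"
      and a: "a \<in> K" and b: "b \<in> K"
    have mc: "modulus_of_continuity \<alpha>" and I: "is_interval I" "K \<subseteq> I" using H by auto
    have mono: "mono_on {0..} \<alpha>" and an: "\<forall>t\<ge>0. \<alpha> t \<ge> 0" using mc by (auto simp: modulus_of_continuity_def)
    have hyp: "\<forall>\<phi>\<in>{f, g}. \<forall>x\<in>I. \<forall>y\<in>I.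
              \<bar>\<phi> y - taylor m \<phi> x y\<bar> \<le> \<alpha> \<bar>x - y\<bar> * \<bar>x - y\<bar> ^ m
            \<and> \<bar>deriv \<phi> y - deriv (taylor m \<phi> x) y\<bar> \<le> \<alpha> \<bar>x - y\<bar> * \<bar>x - y\<bar> ^ (m - 1)"
      using H by blast
    have k: "\<bar>Aarea m f g h a b + Aarea m f g h b a\<bar> \<le> C0 * (\<alpha> \<bar>b - a\<bar> * \<bar>b - a\<bar> ^ m)"
      unfolding C0_def
      by (rule key[OF assms(1,2,3) mono an I(1) _ _ hyp RK[OF a] RK[OF b] Bnd]) (use a b I in auto)
    have X0: "\<alpha> \<bar>b - a\<bar> * \<bar>b - a\<bar> ^ m \<ge> 0" using an by simp
    have "\<bar>Aarea m f g h b a\<bar> \<le> \<bar>Aarea m f g h a b\<bar> + C0 * (\<alpha> \<bar>b - a\<bar> * \<bar>b - a\<bar> ^ m)"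
      using k by linarith
    also have "\<dots> \<le> C * \<bar>Aarea m f g h a b\<bar> + C * (\<alpha> \<bar>b - a\<bar> * \<bar>b - a\<bar> ^ m)"
      using mult_right_mono[OF C1(1) abs_ge_zero[of "Aarea m f g h a b"]] mult_right_mono[OF C1(2) X0]
      by linarith
    finally show "\<bar>Aarea m f g h b a\<bar> \<le> C * (\<bar>Aarea m f g h a b\<bar> + \<alpha> \<bar>b - a\<bar> * \<bar>b - a\<bar> ^ m)"
      by (simp add: distrib_left)
  qed
qed

end
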